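(* If $G$ is a $(3,2)$-critical graph that contains at least three odd cycles, then there exist two odd cycles of $G$ whose intersection is a path with at least one edge.
   Context: All graphs are finite and simple. An odd cycle is a cycle (subgraph) of odd length. For a graph $G$, ${\rm es}_{\chi}(G)$ is the minimum number of edges of $G$ whose removal results in a spanning subgraph $G_1$ with $\chi(G_1)=\chi(G)-1$. $G$ is edge-stability critical if ${\rm es}_{\chi}(G-e)<{\rm es}_{\chi}(G)$ for every edge $e$. $G$ is $(3,2)$-critical if it is edge-stability critical with $\chi(G)=3$ and ${\rm es}_{\chi}(G)=2$. *)

theory Defs
  imports Main
begin

definition simple_graph :: "'a set \<Rightarrow> 'a set set \<Rightarrow> bool" where
  "simple_graph V E \<longleftrightarrow> finite V \<and>
     (\<forall>e\<in>E. \<exists>u v. e = {u, v} \<and> u \<noteq> v \<and> u \<in> V \<and> v \<in> V)"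

definition proper_colouring :: "'a set \<Rightarrow> 'a set set \<Rightarrow> nat \<Rightarrow> ('a \<Rightarrow> nat) \<Rightarrow> bool" where
  "proper_colouring V E k c \<longleftrightarrow> (\<forall>v\<in>V. c v < k) \<and> (\<forall>u v. {u, v} \<in> E \<longrightarrow> c u \<noteq> c v)"

definition chromatic_number :: "'a set \<Rightarrow> 'a set set \<Rightarrow> nat" where
  "chromatic_number V E = (LEAST k. \<exists>c. proper_colouring V E k c)"

definition es_chi :: "'a set \<Rightarrow> 'a set set \<Rightarrow> nat" where
  "es_chi V E = (LEAST k. \<exists>F. F \<subseteq> E \<and> card F = k \<and>
      chromatic_number V (E - F) = chromatic_number V E - 1)"

definition edge_stability_critical :: "'a set \<Rightarrow> 'a set set \<Rightarrow> bool" where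
  "edge_stability_critical V E \<longleftrightarrow> (\<forall>e\<in>E. es_chi V (E - {e}) < es_chi V E)"

definition crit_3_2 :: "'a set \<Rightarrow> 'a set set \<Rightarrow> bool" where
  "crit_3_2 V E \<longleftrightarrow> edge_stability_critical V E \<and> chromatic_number V E = 3 \<and> es_chi V E = 2"

definition cycle_edges :: "'a list \<Rightarrow> 'a set set" where
  "cycle_edges vs = {{vs ! i, vs ! ((i + 1) mod length vs)} | i. i < length vs}"

definition path_edges :: "'a list \<Rightarrow> 'a set set" where
  "path_edges vs = {{vs ! i, vs ! (i + 1)} | i. i + 1 < length vs}"

text \<open>A cycle subgraph of (V,E), identified with its edge set C (its vertex set is \<Union>C).\<close>
definition is_cycle :: "'a set set \<Rightarrow> 'a set set \<Rightarrow> bool" where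
  "is_cycle E C \<longleftrightarrow> C \<subseteq> E \<and>
     (\<exists>vs. distinct vs \<and> length vs \<ge> 3 \<and> C = cycle_edges vs)"

definition odd_cycle :: "'a set set \<Rightarrow> 'a set set \<Rightarrow> bool" where
  "odd_cycle E C \<longleftrightarrow> is_cycle E C \<and> odd (card C)"

definition is_nontrivial_path :: "'a set \<Rightarrow> 'a set set \<Rightarrow> bool" where
  "is_nontrivial_path W F \<longleftrightarrow>
     (\<exists>ps. distinct ps \<and> length ps \<ge> 2 \<and> W = set ps \<and> F = path_edges ps)"

end

theory Submission imports Defs begin

fun pe :: "'a list \<Rightarrow> 'a set set" where
  "pe (x # y # xs) = insert {x, y} (pe (y # xs))"
| "pe _ = {}"

lemma path_edges_Nil[simp]: "path_edges [] = {}"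
  by (simp add: path_edges_def)

lemma path_edges_single[simp]: "path_edges [x] = {}"
  by (simp add: path_edges_def)

lemma path_edges_cons2[simp]: "path_edges (x # y # xs) = insert {x, y} (path_edges (y # xs))"
proof -
  have "path_edges (x # y # xs) = {{(x # y # xs) ! i, (x # y # xs) ! (i + 1)} | i. i + 1 < length xs + 2}"
    by (simp add: path_edges_def)
  also have "\<dots> = insert {x, y} {{(y # xs) ! i, (y # xs) ! (i + 1)} | i. i + 1 < length xs + 1}"
  proof (rule set_eqI, rule iffI)
    fix e assume "e \<in> {{(x # y # xs) ! i, (x # y # xs) ! (i + 1)} | i. i + 1 < length xs + 2}"
    then obtain i where i: "i + 1 < length xs + 2" "e = {(x # y # xs) ! i, (x # y # xs) ! (i + 1)}" by blast
    show "e \<in> insert {x, y} {{(y # xs) ! i, (y # xs) ! (i + 1)} | i. i + 1 < length xs + 1}"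
    proof (cases i)
      case 0 then show ?thesis using i by simp
    next
      case (Suc k) then show ?thesis using i by auto
    qed
  next
    fix e assume "e \<in> insert {x, y} {{(y # xs) ! i, (y # xs) ! (i + 1)} | i. i + 1 < length xs + 1}"
    then consider "e = {x,y}" | k where "k + 1 < length xs + 1" "e = {(y # xs) ! k, (y # xs) ! (k + 1)}" by blast
    then show "e \<in> {{(x # y # xs) ! i, (x # y # xs) ! (i + 1)} | i. i + 1 < length xs + 2}"
    proof cases
      case 1 then show ?thesis by (auto intro!: exI[of _ 0])
    next
      case 2 then show ?thesis by (auto intro!: exI[of _ "Suc k"])
    qed
  qed
  also have "\<dots> = insert {x, y} (path_edges (y # xs))"
    by (simp add: path_edges_def)
  finally show ?thesis .
qed

lemma path_edges_pe: "path_edges xs = pe xs"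
  by (induction xs rule: pe.induct) auto

lemma cycle_edges_path: "vs \<noteq> [] \<Longrightarrow> cycle_edges vs = insert {last vs, hd vs} (path_edges vs)"
proof -
  assume ne: "vs \<noteq> []"
  define n where "n = length vs"
  have n: "n > 0" using ne n_def by simp
  have lastn: "last vs = vs ! (n - 1)" using ne n_def by (simp add: last_conv_nth)
  have hd0: "hd vs = vs ! 0" using ne by (simp add: hd_conv_nth)
  show ?thesis
  proof (rule set_eqI, rule iffI)
    fix e assume "e \<in> cycle_edges vs"
    then obtain i where i: "i < n" "e = {vs ! i, vs ! ((i + 1) mod n)}" unfolding cycle_edges_def n_def by blast
    show "e \<in> insert {last vs, hd vs} (path_edges vs)"
    proof (cases "i + 1 < n")
      case True then show ?thesis using i unfolding path_edges_def n_def by auto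
    next
      case False then have "i = n - 1" using i by simp
      then show ?thesis using i n lastn hd0 by simp
    qed
  next
    fix e assume "e \<in> insert {last vs, hd vs} (path_edges vs)"
    then consider "e = {last vs, hd vs}" | i where "i + 1 < n" "e = {vs ! i, vs ! (i + 1)}"
      unfolding path_edges_def n_def by blast
    then show "e \<in> cycle_edges vs"
    proof cases
      case 1
      have "(n - 1 + 1) mod n = 0" using n by simp
      then show ?thesis unfolding cycle_edges_def using 1 n lastn hd0 n_def
        by (auto intro!: exI[of _ "n - 1"])
    next
      case 2 then show ?thesis unfolding cycle_edges_def n_def by (auto intro!: exI[of _ i])
    qed
  qed
qed


lemma pe_append: "xs \<noteq> [] \<Longrightarrow> ys \<noteq> [] \<Longrightarrow> pe (xs @ ys) = pe xs \<union> pe ys \<union> {{last xs, hd ys}}"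
proof (induction xs rule: pe.induct)
  case (1 x y xs) then show ?case by auto
next
  case ("2_2" v) then show ?case by (cases ys) auto
qed simp

lemma pe_rev: "pe (rev xs) = pe xs"
proof (induction xs rule: pe.induct)
  case (1 x y xs)
  have "pe (rev (x # y # xs)) = pe (rev (y # xs) @ [x])" by simp
  also have "\<dots> = pe (rev (y # xs)) \<union> {{y, x}}" by (subst pe_append) auto
  finally show ?case using 1 by (auto simp: insert_commute)
qed auto

lemma Union_pe_subset: "\<Union>(pe xs) \<subseteq> set xs"
  by (induction xs rule: pe.induct) auto

lemma Union_pe: "length xs \<ge> 2 \<Longrightarrow> \<Union>(pe xs) = set xs"
proof (induction xs rule: pe.induct)
  case (1 x y xs) then show ?case by (cases xs) auto
qed auto

lemma finite_pe[simp]: "finite (pe xs)"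
  by (induction xs rule: pe.induct) auto

lemma card_pe: "distinct xs \<Longrightarrow> card (pe xs) = length xs - 1"
proof (induction xs rule: pe.induct)
  case (1 x y xs)
  have "{x, y} \<notin> pe (y # xs)" using 1(2) Union_pe_subset[of "y # xs"] by auto
  then show ?case using 1 by simp
qed auto

lemma Union_cycle_edges: "vs \<noteq> [] \<Longrightarrow> \<Union>(cycle_edges vs) = set vs"
proof -
  assume ne: "vs \<noteq> []"
  show ?thesis
  proof (cases "length vs \<ge> 2")
    case True then show ?thesis using Union_pe[OF True] ne
      by (auto simp: cycle_edges_path path_edges_pe)
  next
    case False then have "length vs = 1" using ne by (cases vs) (auto simp: not_less_eq_eq)
    then obtain x where "vs = [x]" by (metis One_nat_def length_0_conv length_Suc_conv)
    then show ?thesis by (simp add: cycle_edges_path path_edges_pe)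
  qed
qed

lemma closing_not_pe:
  assumes "distinct vs" "length vs \<ge> 3"
  shows "{last vs, hd vs} \<notin> pe vs"
proof
  assume "{last vs, hd vs} \<in> pe vs"
  then obtain i where i: "i + 1 < length vs" "{last vs, hd vs} = {vs ! i, vs ! (i + 1)}"
    unfolding path_edges_pe[symmetric] path_edges_def by blast
  have ne: "vs \<noteq> []" using assms by auto
  have l: "last vs = vs ! (length vs - 1)" "hd vs = vs ! 0" using ne by (auto simp: last_conv_nth hd_conv_nth)
  from i(2) have disj: "(vs ! (length vs - 1) = vs ! i \<and> vs ! 0 = vs ! (i + 1)) \<or> (vs ! (length vs - 1) = vs ! (i+1) \<and> vs ! 0 = vs ! i)"
    unfolding l by (auto simp: doubleton_eq_iff)
  moreover have inj: "\<And>a b. a < length vs \<Longrightarrow> b < length vs \<Longrightarrow> vs ! a = vs ! b \<Longrightarrow> a = b"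
    using assms(1) nth_eq_iff_index_eq by blast
  from disj show False
  proof
    assume h: "vs ! (length vs - 1) = vs ! i \<and> vs ! 0 = vs ! (i + 1)"
    have "length vs - 1 = i" using inj[OF _ _ conjunct1[OF h]] i(1) by simp
    then show False using i(1) by simp
  next
    assume h: "vs ! (length vs - 1) = vs ! (i+1) \<and> vs ! 0 = vs ! i"
    have "length vs - 1 = i + 1" using inj[OF _ _ conjunct1[OF h]] i(1) by simp
    moreover have "0 = i" using inj[OF _ _ conjunct2[OF h]] i(1) ne by simp
    ultimately show False using assms(2) by simp
  qed
qed

lemma card_cycle_edges: "distinct vs \<Longrightarrow> length vs \<ge> 3 \<Longrightarrow> card (cycle_edges vs) = length vs"
proof -
  assume a: "distinct vs" "length vs \<ge> 3"
  then have ne: "vs \<noteq> []" by auto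
  show ?thesis using closing_not_pe[OF a] card_pe[OF a(1)] a(2)
    by (simp add: cycle_edges_path[OF ne] path_edges_pe)
qed

lemma cycle_edges_rotate1: "cycle_edges (rotate1 vs) = cycle_edges vs"
proof (cases vs)
  case (Cons x xs)
  show ?thesis
  proof (cases xs)
    case Nil then show ?thesis using Cons by simp
  next
    case (Cons y ys)
    have "cycle_edges (rotate1 vs) = insert {x, y} (pe (y # ys @ [x]))"
      using Cons \<open>vs = x # xs\<close> by (simp add: cycle_edges_path path_edges_pe)
    also have "pe (y # ys @ [x]) = pe (y # ys) \<union> {{last (y # ys), x}}"
      using pe_append[of "y # ys" "[x]"] by simp
    finally show ?thesis using Cons \<open>vs = x # xs\<close>
      by (auto simp: cycle_edges_path path_edges_pe insert_commute)
  qed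
qed simp

lemma cycle_edges_rotate: "cycle_edges (rotate k vs) = cycle_edges vs"
  by (induction k) (auto simp: cycle_edges_rotate1)

lemma pe_colour:
  assumes "\<forall>u v. {u, v} \<in> E' \<longrightarrow> c u \<noteq> c (v::'a)" "\<forall>v\<in>set xs. c v < (2::nat)" "pe xs \<subseteq> E'" "xs \<noteq> []"
  shows "c (last xs) = (c (hd xs) + length xs - 1) mod 2"
  using assms
proof (induction xs rule: pe.induct)
  case (1 x y xs)
  have "c x \<noteq> c y" using 1 by auto
  moreover have "c x < 2" "c y < 2" using 1 by auto
  ultimately have "(c x = 0 \<and> c y = 1) \<or> (c x = 1 \<and> c y = 0)" by linarith
  then have "c y = (c x + 1) mod 2" by auto
  then show ?case using 1 by (auto simp: mod_simps)
qed auto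


lemma odd_cycle_not_bip:
  assumes "distinct vs" "length vs \<ge> 3" "odd (length vs)" "cycle_edges vs \<subseteq> E'"
    "\<forall>u v. {u, v} \<in> E' \<longrightarrow> c u \<noteq> c (v::'a)" "\<forall>v\<in>set vs. c v < (2::nat)"
  shows False
proof -
  have ne: "vs \<noteq> []" using assms by auto
  have ce: "cycle_edges vs = insert {last vs, hd vs} (pe vs)" by (simp add: cycle_edges_path[OF ne] path_edges_pe)
  have "c (last vs) = (c (hd vs) + length vs - 1) mod 2"
    using pe_colour[of E' c vs] assms ne ce by auto
  moreover have "c (hd vs) < 2" using assms(6) ne by simp
  moreover obtain k where "length vs = 2 * k + 1" using assms(3) oddE by blast
  ultimately have "c (last vs) = c (hd vs)" by simp
  moreover have "{last vs, hd vs} \<in> E'" using ce assms(4) by auto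
  ultimately show False using assms(5) by blast
qed

lemma path_edges_take_sub: "path_edges (take m xs) \<subseteq> path_edges xs"
  unfolding path_edges_def by force

lemma path_sub_cycle: "path_edges xs \<subseteq> cycle_edges xs"
  by (cases "xs = []") (auto simp: cycle_edges_path)

lemma ear_cycle:
  fixes C E :: "'a set set" and ds B :: "'a list"
  assumes CE: "C \<subseteq> E" and DE: "cycle_edges ds \<subseteq> E" and dd: "distinct ds"
    and j: "1 \<le> j" "j < length ds"
    and x: "ds ! 0 \<in> \<Union>C" and e0: "{ds ! 0, ds ! 1} \<notin> C"
    and inner: "\<forall>k. 0 < k \<and> k < j \<longrightarrow> ds ! k \<notin> \<Union>C"
    and dB: "distinct B" "B \<noteq> []" "set B \<subseteq> \<Union>C" "ds ! 0 \<notin> set B" "hd B = ds ! j"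
    and pB: "pe (B @ [ds ! 0]) \<subseteq> C"
  shows "is_cycle E (cycle_edges (take j ds @ B)) \<and> card (cycle_edges (take j ds @ B)) = j + length B
     \<and> is_nontrivial_path (\<Union>C \<inter> \<Union>(cycle_edges (take j ds @ B))) (C \<inter> cycle_edges (take j ds @ B))"
proof -
  define Q where "Q = take j ds"
  define x where "x = ds ! 0"
  have Qne: "Q \<noteq> []" using j Q_def by auto
  have hdQ: "hd Q = x" using j Q_def x_def by (cases ds) auto
  have lenQ: "length Q = j" using j Q_def by simp
  have take1: "take (j + 1) ds = Q @ [ds ! j]" using j Q_def by (simp add: take_Suc_conv_app_nth)
  have setQ: "\<forall>v\<in>set Q. v = x \<or> v \<notin> \<Union>C"
  proof
    fix v assume "v \<in> set Q"
    then obtain k where "k < j" "v = ds ! k" using Q_def j by (auto simp: in_set_conv_nth)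
    then show "v = x \<or> v \<notin> \<Union>C" using inner x_def by (cases k) auto
  qed
  have disj: "set Q \<inter> set B = {}"
  proof (rule ccontr)
    assume "set Q \<inter> set B \<noteq> {}"
    then obtain v where "v \<in> set Q" "v \<in> set B" by blast
    then have "v = x \<or> v \<notin> \<Union>C" using setQ by blast
    moreover have "v \<in> \<Union>C" using \<open>v \<in> set B\<close> dB(3) by blast
    ultimately have "v = x" by blast
    then show False using \<open>v \<in> set B\<close> dB(4) x_def by simp
  qed
  have dQB: "distinct (Q @ B)" using dd disj dB Q_def by simp
  have ce: "cycle_edges (Q @ B) = pe (B @ [x]) \<union> pe (take (j + 1) ds)"
  proof -
    have "cycle_edges (Q @ B) = insert {last B, x} (pe (Q @ B))"
      using dB Qne hdQ by (simp add: cycle_edges_path path_edges_pe)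
    also have "pe (Q @ B) = pe Q \<union> pe B \<union> {{last Q, ds ! j}}"
      using pe_append[OF Qne dB(2)] dB by simp
    also have "pe (take (j + 1) ds) = pe Q \<union> {{last Q, ds ! j}}"
      unfolding take1 using pe_append[OF Qne, of "[ds ! j]"] by simp
    moreover have "pe (B @ [x]) = pe B \<union> {{last B, x}}"
      using pe_append[OF dB(2), of "[x]"] by simp
    ultimately show ?thesis by auto
  qed
  have PE: "pe (take (j + 1) ds) \<subseteq> E"
    using path_edges_take_sub[of "j+1" ds] path_sub_cycle[of ds] DE by (auto simp: path_edges_pe)
  have PC: "pe (take (j + 1) ds) \<inter> C = {}"
  proof (rule ccontr)
    assume "pe (take (j + 1) ds) \<inter> C \<noteq> {}"
    then obtain i where i: "i + 1 < j + 1" "{take (j + 1) ds ! i, take (j + 1) ds ! (i + 1)} \<in> C"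
      unfolding path_edges_pe[symmetric] path_edges_def using j by auto
    then have iC: "{ds ! i, ds ! (i + 1)} \<in> C" by simp
    then have "ds ! i \<in> \<Union>C" "ds ! (i + 1) \<in> \<Union>C" by auto
    show False
    proof (cases i)
      case 0
      show False
      proof (cases "j = 1")
        case True then show False using iC e0 0 by simp
      next
        case False then show False using inner \<open>ds ! (i + 1) \<in> \<Union>C\<close> 0 i j by auto
      qed
    next
      case (Suc k) then show False using inner \<open>ds ! i \<in> \<Union>C\<close> i by auto
    qed
  qed
  have len3: "length (Q @ B) \<ge> 3"
  proof (rule ccontr)
    assume "\<not> 3 \<le> length (Q @ B)"
    moreover have "length B \<ge> 1" using dB(2) by (cases B) auto
    ultimately have "j = 1" "length B = 1" using lenQ j by auto
    then have "B = [ds ! 1]" using dB(5) by (cases B) auto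
    then have "{ds ! 1, ds ! 0} \<in> C" using pB by simp
    then show False using e0 by (simp add: insert_commute)
  qed
  have cyc: "is_cycle E (cycle_edges (Q @ B))"
    unfolding is_cycle_def using ce PE pB CE dQB len3 x_def by blast
  have card: "card (cycle_edges (Q @ B)) = j + length B"
    using card_cycle_edges[OF dQB len3] lenQ by simp
  have vert: "\<Union>C \<inter> \<Union>(cycle_edges (Q @ B)) = set (B @ [x])"
  proof -
    have xQ: "x \<in> set Q" using hdQ Qne by (metis list.set_sel(1))
    have "\<Union>(cycle_edges (Q @ B)) = set Q \<union> set B" using Union_cycle_edges[of "Q @ B"] Qne by simp
    moreover have "\<Union>C \<inter> set Q = {x}"
    proof
      show "\<Union>C \<inter> set Q \<subseteq> {x}" using setQ by blast
      show "{x} \<subseteq> \<Union>C \<inter> set Q" using xQ x x_def by simp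
    qed
    moreover have "\<Union>C \<inter> set B = set B" using dB(3) by blast
    ultimately show ?thesis by auto
  qed
  have edg: "C \<inter> cycle_edges (Q @ B) = path_edges (B @ [x])"
    using ce PC pB x_def by (auto simp: path_edges_pe)
  have "is_nontrivial_path (set (B @ [x])) (path_edges (B @ [x]))"
    unfolding is_nontrivial_path_def using dB x_def dB(2)
    by (intro exI[of _ "B @ [x]"]) (auto simp: Suc_le_eq)
  then show ?thesis using cyc card vert edg Q_def by simp
qed


lemma pe_tl_sub: "pe (tl xs) \<subseteq> pe xs"
  by (cases xs rule: pe.cases) auto

lemma pe_drop_sub: "pe (drop m xs) \<subseteq> pe xs"
proof (induction m arbitrary: xs)
  case (Suc m)
  have "pe (drop m (tl xs)) \<subseteq> pe (tl xs)" by (rule Suc)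
  then show ?case using pe_tl_sub[of xs] by (simp add: drop_Suc)
qed simp

lemma ear_start:
  assumes n: "n = length ds" "n \<ge> 3"
    and k: "k < n" "{ds ! k, ds ! ((k + 1) mod n)} \<in> C"
    and i: "i < n" "{ds ! i, ds ! ((i + 1) mod n)} \<notin> C"
  shows "\<exists>l<n. ds ! l \<in> \<Union>C \<and> {ds ! l, ds ! ((l + 1) mod n)} \<notin> C"
proof (rule ccontr)
  assume H: "\<not> ?thesis"
  have all: "ds ! ((k + t) mod n) \<in> \<Union>C" for t
  proof (induction t)
    case 0 then show ?case using k by auto
  next
    case (Suc t)
    define l where "l = (k + t) mod n"
    have "n > 0" using n(2) by linarith
    then have "l < n" using l_def by simp
    then have "{ds ! l, ds ! ((l + 1) mod n)} \<in> C" using H Suc l_def by blast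
    moreover have "(l + 1) mod n = (k + Suc t) mod n" using l_def by (simp add: mod_Suc_eq)
    ultimately show ?case by auto
  qed
  have "(k + (i + n - k)) mod n = i" using k i by simp
  then have "ds ! i \<in> \<Union>C" using all[of "i + n - k"] by simp
  then show False using H i by blast
qed


lemma main_lemma:
  assumes oC: "odd_cycle E C" and cD: "is_cycle E D" and CD: "C \<inter> D \<noteq> {}" and nsub: "\<not> D \<subseteq> C"
  shows "\<exists>C1 C2. odd_cycle E C1 \<and> odd_cycle E C2 \<and>
           is_nontrivial_path (\<Union>C1 \<inter> \<Union>C2) (C1 \<inter> C2)"
proof -
  obtain cs0 where cs0: "distinct cs0" "length cs0 \<ge> 3" "C = cycle_edges cs0" and CE: "C \<subseteq> E"
    and oddC: "odd (card C)"
    using oC unfolding odd_cycle_def is_cycle_def by blast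
  obtain ds0 where ds0: "distinct ds0" "length ds0 \<ge> 3" "D = cycle_edges ds0" and DE: "D \<subseteq> E"
    using cD unfolding is_cycle_def by blast
  define n where "n = length ds0"
  have n3: "n \<ge> 3" using ds0 n_def by simp
  have npos: "n > 0" using n3 by linarith
  obtain e where e: "e \<in> C" "e \<in> D" using CD by blast
  obtain k where k: "k < n" "{ds0 ! k, ds0 ! ((k + 1) mod n)} \<in> C"
    using e ds0(3) unfolding cycle_edges_def n_def by blast
  obtain i where i: "i < n" "{ds0 ! i, ds0 ! ((i + 1) mod n)} \<notin> C"
    using nsub ds0(3) unfolding cycle_edges_def n_def by blast
  obtain l where l: "l < n" "ds0 ! l \<in> \<Union>C" "{ds0 ! l, ds0 ! ((l + 1) mod n)} \<notin> C"
    using ear_start[OF n_def n3 k i] by blast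
  define ds where "ds = rotate l ds0"
  have dsd: "distinct ds" and lends: "length ds = n" and Dds: "D = cycle_edges ds"
    using ds0 ds_def n_def by (auto simp: cycle_edges_rotate)
  have ds_nth: "ds ! t = ds0 ! ((l + t) mod n)" if "t < n" for t
    using that ds_def n_def by (simp add: nth_rotate)
  have ds0': "ds ! 0 = ds0 ! l" using ds_nth[of 0] l npos by simp
  have ds1': "ds ! 1 = ds0 ! ((l + 1) mod n)" using ds_nth[of 1] n3 by simp
  have x: "ds ! 0 \<in> \<Union>C" and e0: "{ds ! 0, ds ! 1} \<notin> C" using l ds0' ds1' by auto
  have exk: "\<exists>k. 0 < k \<and> k < n \<and> ds ! k \<in> \<Union>C"
  proof -
    obtain a where a: "a < n" "{ds ! a, ds ! ((a + 1) mod n)} \<in> C"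
      using e Dds lends unfolding cycle_edges_def by blast
    show ?thesis
    proof (cases "a = 0")
      case True
      then have "ds ! 1 \<in> \<Union>C" using a n3 by auto
      then show ?thesis using n3 by (intro exI[of _ 1]) auto
    next
      case False
      then show ?thesis using a by (intro exI[of _ a]) auto
    qed
  qed
  define j where "j = (LEAST k. 0 < k \<and> k < n \<and> ds ! k \<in> \<Union>C)"
  have jP: "0 < j \<and> j < n \<and> ds ! j \<in> \<Union>C"
    using LeastI_ex[OF exk] j_def by simp
  have inner: "\<forall>k. 0 < k \<and> k < j \<longrightarrow> ds ! k \<notin> \<Union>C"
  proof (intro allI impI)
    fix k assume "0 < k \<and> k < j"
    then show "ds ! k \<notin> \<Union>C" using not_less_Least[of k "\<lambda>k. 0 < k \<and> k < n \<and> ds ! k \<in> \<Union>C"] jP j_def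
      by auto
  qed
  define L where "L = length cs0"
  have L3: "L \<ge> 3" using cs0 L_def by simp
  have "cs0 \<noteq> []" using cs0(2) by auto
  then have UC: "\<Union>C = set cs0" using Union_cycle_edges cs0(3) by simp
  obtain p where p: "p < L" "cs0 ! p = ds ! 0" using x UC L_def by (auto simp: in_set_conv_nth)
  define cs where "cs = rotate p cs0"
  have csd: "distinct cs" and lencs: "length cs = L" and Ccs: "C = cycle_edges cs" and setcs: "set cs = \<Union>C"
    using cs0 cs_def L_def UC by (auto simp: cycle_edges_rotate)
  have cs0x: "cs ! 0 = ds ! 0"
  proof -
    have "0 < length cs0" using L3 L_def by linarith
    then have "cs ! 0 = cs0 ! ((p + 0) mod length cs0)" using cs_def nth_rotate by blast
    then show ?thesis using p L_def by simp
  qed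
  have "ds ! j \<in> set cs" using jP setcs by simp
  then obtain m where m: "m < L" "cs ! m = ds ! j" using lencs by (auto simp: in_set_conv_nth)
  have "ds ! j \<noteq> ds ! 0" using jP dsd lends by (simp add: nth_eq_iff_index_eq)
  then have m0: "m \<noteq> 0" using m(2) cs0x by metis
  have csne: "cs \<noteq> []" using lencs L3 by auto
  have hdcs: "hd cs = ds ! 0" using cs0x csne by (simp add: hd_conv_nth)
  have cs_split: "cs = ds ! 0 # tl cs" using hdcs csne by (cases cs) auto
  have Jds: "cycle_edges ds \<subseteq> E" using Dds DE by simp
  have j1: "1 \<le> j" "j < length ds" using jP lends by auto
  define B1 where "B1 = rev (take m (tl cs))"
  have B1: "distinct B1" "B1 \<noteq> []" "set B1 \<subseteq> \<Union>C" "ds ! 0 \<notin> set B1" "hd B1 = ds ! j"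
    "pe (B1 @ [ds ! 0]) \<subseteq> C" "length B1 = m"
  proof -
    show "distinct B1" using csd B1_def by (simp add: distinct_tl)
    have "length (tl cs) \<ge> 2" using lencs L3 by simp
    then have tlne: "tl cs \<noteq> []" by (cases "tl cs") auto
    then show "B1 \<noteq> []" using B1_def m0 by simp
    have "set (take m (tl cs)) \<subseteq> set cs" using set_take_subset[of m "tl cs"] cs_split by (metis set_subset_Cons subset_trans)
    then show "set B1 \<subseteq> \<Union>C" using B1_def setcs by simp
    show "ds ! 0 \<notin> set B1" using B1_def csd cs_split
      by (metis distinct.simps(2) in_set_takeD set_rev)
    have ltl: "length (tl cs) = L - 1" using lencs by simp
    have tne: "take m (tl cs) \<noteq> []" using tlne m0 by simp
    have lt: "length (take m (tl cs)) = m" using ltl m by simp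
    have "last (take m (tl cs)) = take m (tl cs) ! (m - 1)" using last_conv_nth[OF tne] lt by simp
    also have "\<dots> = tl cs ! (m - 1)" using m0 by simp
    finally have "last (take m (tl cs)) = tl cs ! (m - 1)" .
    also have "\<dots> = cs ! m"
    proof -
      have "cs ! m = (ds ! 0 # tl cs) ! m" using arg_cong[OF cs_split, of "\<lambda>l. l ! m"] .
      then show ?thesis using m0 by (simp add: nth_Cons')
    qed
    finally show "hd B1 = ds ! j" using B1_def m by (simp add: hd_rev)
    have "B1 @ [ds ! 0] = rev (take (m + 1) cs)" using B1_def cs_split
      by (metis Suc_eq_plus1 rev.simps(2) take_Suc_Cons)
    then have "pe (B1 @ [ds ! 0]) = path_edges (take (m + 1) cs)" by (simp add: pe_rev path_edges_pe)
    also have "\<dots> \<subseteq> C" using path_edges_take_sub path_sub_cycle Ccs by blast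
    finally show "pe (B1 @ [ds ! 0]) \<subseteq> C" .
    show "length B1 = m" using B1_def m lencs by simp
  qed
  define B2 where "B2 = drop m cs"
  have B2: "distinct B2" "B2 \<noteq> []" "set B2 \<subseteq> \<Union>C" "ds ! 0 \<notin> set B2" "hd B2 = ds ! j"
    "pe (B2 @ [ds ! 0]) \<subseteq> C" "length B2 = L - m"
  proof -
    show "distinct B2" using csd B2_def by simp
    show "B2 \<noteq> []" using B2_def m lencs by simp
    show "set B2 \<subseteq> \<Union>C" using B2_def setcs by (auto dest: in_set_dropD)
    show "ds ! 0 \<notin> set B2"
    proof
      assume "ds ! 0 \<in> set B2"
      then obtain t where t: "t < L - m" "cs ! (m + t) = ds ! 0" using B2_def lencs m
        by (auto simp: in_set_conv_nth)
      then have "m + t = 0" using cs0x csd lencs L3 nth_eq_iff_index_eq[OF csd, of "m + t" 0] by simp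
      then show False using m0 by simp
    qed
    show "hd B2 = ds ! j" using B2_def m lencs by (simp add: hd_drop_conv_nth)
    have "pe (B2 @ [ds ! 0]) = pe B2 \<union> {{last B2, ds ! 0}}"
      using pe_append[OF \<open>B2 \<noteq> []\<close>, of "[ds ! 0]"] by simp
    also have "last B2 = last cs" using B2_def m lencs by simp
    also have "pe B2 \<subseteq> pe cs" using B2_def pe_drop_sub by simp
    then have "pe B2 \<union> {{last cs, ds ! 0}} \<subseteq> C"
      using Ccs hdcs by (auto simp: cycle_edges_path[OF csne] path_edges_pe)
    finally show "pe (B2 @ [ds ! 0]) \<subseteq> C" .
    show "length B2 = L - m" using B2_def lencs by simp
  qed
  note r1 = ear_cycle[OF CE Jds dsd j1 x e0 inner B1(1-6)]
  note r2 = ear_cycle[OF CE Jds dsd j1 x e0 inner B2(1-6)]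
  have "card C = L" using card_cycle_edges[OF cs0(1,2)] cs0(3) L_def by simp
  then have "odd (j + length B1) \<or> odd (j + length B2)" using oddC B1(7) B2(7) m by presburger
  then show ?thesis
  proof
    assume "odd (j + length B1)"
    then show ?thesis using r1 oC unfolding odd_cycle_def by metis
  next
    assume "odd (j + length B2)"
    then show ?thesis using r2 oC unfolding odd_cycle_def by metis
  qed
qed




lemma edge_split:
  assumes "simple_graph V E" "{u, v} \<in> E"
  shows "u \<noteq> v \<and> u \<in> V \<and> v \<in> V"
proof -
  obtain a b where "{u, v} = {a, b}" "a \<noteq> b" "a \<in> V" "b \<in> V"
    using assms unfolding simple_graph_def by blast
  then show ?thesis by (auto simp: doubleton_eq_iff)
qed

lemma colour_exists:
  assumes "simple_graph V E" "E' \<subseteq> E"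
  shows "\<exists>k c. proper_colouring V E' k c"
proof -
  have "finite V" using assms unfolding simple_graph_def by simp
  then obtain f n where f: "f ` V = {i::nat. i < n}" "inj_on f V"
    using finite_imp_inj_to_nat_seg by blast
  have "proper_colouring V E' n f"
    unfolding proper_colouring_def
  proof (intro conjI allI impI ballI)
    fix v assume "v \<in> V" then show "f v < n" using f by auto
  next
    fix u v assume "{u, v} \<in> E'"
    then have "u \<noteq> v \<and> u \<in> V \<and> v \<in> V" using edge_split[OF assms(1)] assms(2) by blast
    then show "f u \<noteq> f v" using f(2) by (auto dest: inj_onD)
  qed
  then show ?thesis by blast
qed

lemma chi_single:
  assumes "u \<noteq> w" "u \<in> V" "w \<in> V"
  shows "chromatic_number V {{u, w}} = 2"
  unfolding chromatic_number_def
proof (rule Least_equality)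
  show "\<exists>c. proper_colouring V {{u, w}} 2 c"
    using assms unfolding proper_colouring_def
    by (intro exI[of _ "\<lambda>v. if v = u then 0 else 1"]) (auto simp: doubleton_eq_iff)
next
  fix k assume "\<exists>c. proper_colouring V {{u, w}} k c"
  then obtain c where c: "proper_colouring V {{u, w}} k c" by blast
  then have "c u < k" "c w < k" "c u \<noteq> c w" using assms unfolding proper_colouring_def by auto
  then show "2 \<le> k" by linarith
qed

lemma odd_cycle_meets:
  assumes sg: "simple_graph V E" and oc: "odd_cycle E C" and F: "F \<subseteq> E"
    and c: "proper_colouring V (E - F) 2 c"
  shows "C \<inter> F \<noteq> {}"
proof
  assume CF: "C \<inter> F = {}"
  obtain vs where vs: "distinct vs" "length vs \<ge> 3" "C = cycle_edges vs" "C \<subseteq> E" "odd (card C)"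
    using oc unfolding odd_cycle_def is_cycle_def by blast
  have ne: "vs \<noteq> []" using vs by auto
  have sub: "cycle_edges vs \<subseteq> E - F" using vs CF by auto
  have "set vs \<subseteq> V"
  proof
    fix v assume "v \<in> set vs"
    then obtain e where "e \<in> C" "v \<in> e" using Union_cycle_edges[OF ne] vs(3) by auto
    then obtain a b where "e = {a, b}" "a \<in> V" "b \<in> V" using sg vs(4) unfolding simple_graph_def by blast
    then show "v \<in> V" using \<open>v \<in> e\<close> by auto
  qed
  then have "\<forall>v\<in>set vs. c v < 2" using c unfolding proper_colouring_def by auto
  moreover have "\<forall>u v. {u, v} \<in> E - F \<longrightarrow> c u \<noteq> c v" using c unfolding proper_colouring_def by auto
  moreover have "odd (length vs)" using vs card_cycle_edges[OF vs(1,2)] by simp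
  ultimately show False using odd_cycle_not_bip[OF vs(1,2) _ sub] by blast
qed

theorem lemma2p5:
  fixes V :: "'a set" and E :: "'a set set"
  assumes "simple_graph V E"
    and "crit_3_2 V E"
    and "\<exists>C1 C2 C3. odd_cycle E C1 \<and> odd_cycle E C2 \<and> odd_cycle E C3
           \<and> C1 \<noteq> C2 \<and> C1 \<noteq> C3 \<and> C2 \<noteq> C3"
  shows "\<exists>C1 C2. odd_cycle E C1 \<and> odd_cycle E C2 \<and>
           is_nontrivial_path (\<Union>C1 \<inter> \<Union>C2) (C1 \<inter> C2)"
proof -
  have sg: "simple_graph V E" by fact
  obtain C1 C2 C3 where C: "odd_cycle E C1" "odd_cycle E C2" "odd_cycle E C3"
    "C1 \<noteq> C2" "C1 \<noteq> C3" "C2 \<noteq> C3" using assms(3) by blast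
  have chi: "chromatic_number V E = 3" and es: "es_chi V E = 2"
    using assms(2) unfolding crit_3_2_def by auto
  obtain vs where vs: "distinct vs" "length vs \<ge> 3" "C1 = cycle_edges vs" "C1 \<subseteq> E"
    using C(1) unfolding odd_cycle_def is_cycle_def by blast
  have "vs \<noteq> []" using vs by auto
  then have "{last vs, hd vs} \<in> C1" using vs(3) by (simp add: cycle_edges_path)
  then obtain e where eE: "e \<in> E" using vs(4) by blast
  then obtain u w where uw: "e = {u, w}" "u \<noteq> w" "u \<in> V" "w \<in> V"
    using sg unfolding simple_graph_def by blast
  define P where "P = (\<lambda>k. \<exists>F. F \<subseteq> E \<and> card F = k \<and>
      chromatic_number V (E - F) = chromatic_number V E - 1)"
  have "E - (E - {e}) = {e}" using eE by auto
  then have "P (card (E - {e}))" unfolding P_def using chi chi_single[OF uw(2-4)] uw(1)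
    by (intro exI[of _ "E - {e}"]) auto
  then have "P (Least P)" by (rule LeastI)
  then have "P 2" using es unfolding es_chi_def P_def by simp
  then obtain F where F: "F \<subseteq> E" "card F = 2" "chromatic_number V (E - F) = 2"
    unfolding P_def using chi by auto
  have "\<exists>k c. proper_colouring V (E - F) k c" using colour_exists[OF sg] by blast
  then have "\<exists>c. proper_colouring V (E - F) (chromatic_number V (E - F)) c"
    unfolding chromatic_number_def by (rule LeastI_ex)
  then obtain c where c: "proper_colouring V (E - F) 2 c" using F(3) by auto
  have M: "Ci \<inter> F \<noteq> {}" if "odd_cycle E Ci" for Ci using odd_cycle_meets[OF sg that F(1) c] .
  obtain f1 f2 where F12: "F = {f1, f2}" using F(2) unfolding card_2_iff by blast
  have "\<exists>Ca Cb. odd_cycle E Ca \<and> odd_cycle E Cb \<and> Ca \<noteq> Cb \<and> Ca \<inter> Cb \<noteq> {}"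
  proof -
    have h: "f1 \<in> Ci \<or> f2 \<in> Ci" if "odd_cycle E Ci" for Ci using M[OF that] F12 by auto
    have h1: "f1 \<in> C1 \<or> f2 \<in> C1" by (rule h[OF C(1)])
    have h2: "f1 \<in> C2 \<or> f2 \<in> C2" by (rule h[OF C(2)])
    have h3: "f1 \<in> C3 \<or> f2 \<in> C3" by (rule h[OF C(3)])
    have "C1 \<inter> C2 \<noteq> {} \<or> C1 \<inter> C3 \<noteq> {} \<or> C2 \<inter> C3 \<noteq> {}"
      using h1 h2 h3 by blast
    then show ?thesis
    proof (elim disjE)
      assume "C1 \<inter> C2 \<noteq> {}" then show ?thesis using C(1,2,4) by blast
    next
      assume "C1 \<inter> C3 \<noteq> {}" then show ?thesis using C(1,3,5) by blast
    next
      assume "C2 \<inter> C3 \<noteq> {}" then show ?thesis using C(2,3,6) by blast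
    qed
  qed
  then obtain Ca Cb where ab: "odd_cycle E Ca" "odd_cycle E Cb" "Ca \<noteq> Cb" "Ca \<inter> Cb \<noteq> {}" by blast
  show ?thesis
  proof (cases "Cb \<subseteq> Ca")
    case False
    have "is_cycle E Cb" using ab(2) unfolding odd_cycle_def by blast
    then show ?thesis using main_lemma[OF ab(1) _ ab(4) False] by blast
  next
    case True
    then have "\<not> Ca \<subseteq> Cb" using ab(3) by blast
    moreover have "Cb \<inter> Ca \<noteq> {}" using ab(4) by blast
    moreover have "is_cycle E Ca" using ab(1) unfolding odd_cycle_def by blast
    ultimately show ?thesis using main_lemma[OF ab(2)] by blast
  qed
qed

end
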